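(* Let $a>0$, $1<b\le 2$, $R_0>R_\infty>0$ and $\tau>0$, with $(a,b)\neq(1,2)$. Define, for $\Re\{s\}>0$, $Z_U(s):=R_\infty+(R_0-R_\infty)\,\frac{U(a,b,s\tau)}{1+U(a,b,s\tau)}$. Then $Z_U$ is not a single-time-constant Debye element: there is no $\tau'>0$ such that $Z_U(s)=R_\infty+\frac{R_0-R_\infty}{1+s\tau'}$ for all $s$ with $\Re\{s\}>0$. In particular, its time-domain relaxation is not a single exponential.
   Context: $U(a,b,z)$ denotes the Tricomi confluent hypergeometric function, given for $a>0$, $b>1$, $\Re\{z\}>0$ by $U(a,b,z)=\frac{1}{\Gamma(a)}\int_0^\infty e^{-zt}t^{a-1}(1+t)^{b-a-1}\,\mathrm{d}t$. *)

theory Defs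
  imports "HOL-Analysis.Analysis"
begin

text \<open>Tricomi confluent hypergeometric function, via its integral representation
  (valid for a > 0, Re z > 0):
  U(a,b,z) = 1/Gamma(a) * integral over (0,inf) of exp(-z t) t^(a-1) (1+t)^(b-a-1) dt.\<close>
definition tricomiU :: "real \<Rightarrow> real \<Rightarrow> complex \<Rightarrow> complex" where
  "tricomiU a b z =
     complex_of_real (1 / Gamma a) *
     integral {0<..} (\<lambda>t::real. exp (- z * complex_of_real t) *
                                 complex_of_real (t powr (a - 1) * (1 + t) powr (b - a - 1)))"

definition Z_U :: "real \<Rightarrow> real \<Rightarrow> real \<Rightarrow> real \<Rightarrow> real \<Rightarrow> complex \<Rightarrow> complex" where
  "Z_U a b R0 Rinf tau s =
     complex_of_real Rinf + complex_of_real (R0 - Rinf) *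
       (tricomiU a b (s * complex_of_real tau) / (1 + tricomiU a b (s * complex_of_real tau)))"

end

theory Submission
  imports Defs
begin

lemma gamma_Ioi:
  fixes p :: real assumes p: "p > 0"
  shows "((\<lambda>t. t powr (p - 1) / exp t) has_integral Gamma p) {0<..}"
proof -
  have "((\<lambda>t. t powr (p - 1) / exp t) has_integral Gamma p) {0..}"
    using Gamma_integral_real[OF p] .
  then show ?thesis
    by (subst has_integral_spike_set_eq) (auto intro: negligible_subset[of "{0}"])
qed

lemma gamma_scaled:
  fixes p y :: real assumes p: "p > 0" and y: "y > 0"
  shows "((\<lambda>t. t powr (p - 1) * exp (- (y * t))) has_integral Gamma p / y powr p) {0<..}"
proof -
  define f where "f = (\<lambda>t::real. t powr (p - 1) / exp t)"
  have fi: "(f has_integral Gamma p) {0<..}" using gamma_Ioi[OF p] by (simp add: f_def)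
  have fa: "f absolutely_integrable_on {0<..}"
    using fi by (intro nonnegative_absolutely_integrable_1) (auto simp: f_def)
  have img: "(\<lambda>x. y * x) ` {0<..} = {0<..}"
  proof (rule set_eqI, rule iffI)
    fix u :: real assume "u \<in> (\<lambda>x. y * x) ` {0<..}"
    then show "u \<in> {0<..}" using y by auto
  next
    fix u :: real assume "u \<in> {0<..}"
    then have "u = y * (u / y)" "u / y \<in> {0<..}" using y by auto
    then show "u \<in> (\<lambda>x. y * x) ` {0<..}" by (rule image_eqI)
  qed
  have leb: "{(0::real)<..} \<in> sets lebesgue"
    by (metis borel_open open_greaterThan sets_completionI_sets sets_lborel)
  have der: "((\<lambda>x. y * x) has_field_derivative y) (at x within {0<..})" for x
    by (auto intro!: derivative_eq_intros)
  have inj: "inj_on (\<lambda>x. y * x) {0<..}" using y by (simp add: inj_on_def)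
  note iff = has_absolute_integral_change_of_variables_1'[of "{0<..}" "\<lambda>x. y * x" "\<lambda>_. y" f "Gamma p", OF leb der inj]
  have "(\<lambda>x. \<bar>y\<bar> * f (y * x)) absolutely_integrable_on {0<..} \<and>
           integral {0<..} (\<lambda>x. \<bar>y\<bar> * f (y * x)) = Gamma p"
    using iff fa fi img by (simp add: has_integral_iff)
  then have "((\<lambda>x. \<bar>y\<bar> * f (y * x)) has_integral Gamma p) {0<..}"
    using has_integral_iff set_lebesgue_integral_eq_integral(1) by blast
  then have "((\<lambda>x. (1 / y powr p) * (\<bar>y\<bar> * f (y * x))) has_integral (1 / y powr p) * Gamma p) {0<..}"
    by (rule has_integral_mult_right)
  moreover have "(1 / y powr p) * (\<bar>y\<bar> * f (y * x)) = x powr (p - 1) * exp (- (y * x))" if "x \<in> {0<..}" for x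
  proof -
    have "y powr (p - 1) = y powr p / y" using y by (simp add: powr_diff)
    then show ?thesis using y that
      by (simp add: f_def powr_mult exp_minus field_simps)
  qed
  ultimately show ?thesis
    by (subst has_integral_cong[symmetric]) (auto simp: field_simps)
qed

lemma exp_scaled:
  fixes y :: real assumes y: "y > 0"
  shows "((\<lambda>t. exp (- (y * t))) has_integral 1 / y) {0<..}"
proof -
  have "((\<lambda>t. t powr (1 - 1) * exp (- (y * t))) has_integral Gamma 1 / y powr 1) {0<..}"
    using gamma_scaled[of 1 y] y by simp
  then show ?thesis using y
    by (subst (asm) has_integral_cong) auto
qed

lemma integral_cor:
  "integral S (\<lambda>x. complex_of_real (f x)) = of_real (integral S f)"
proof (cases "f integrable_on S")
  case True
  then show ?thesis
    using has_integral_of_real[of f "integral S f" S] integral_unique by blast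
next
  case False
  have "\<not> (\<lambda>x. complex_of_real (f x)) integrable_on S"
  proof
    assume "(\<lambda>x. complex_of_real (f x)) integrable_on S"
    from integrable_linear[OF this bounded_linear_Re] have "f integrable_on S"
      by (simp add: o_def)
    with False show False by simp
  qed
  then show ?thesis using False by (simp add: not_integrable_integral)
qed

lemma powr_inv_exp:
  fixes c e :: real assumes "c > 0" "e \<noteq> 0"
  shows "(c powr (1 / e)) powr e = c" "c powr (1 / e) > 0"
  using assms by (simp_all add: powr_powr)

theorem proposition1:
  fixes a b R0 Rinf tau :: real
  assumes "a > 0" and "1 < b" and "b \<le> 2"
    and "R0 > Rinf" and "Rinf > 0" and "tau > 0"
    and "(a, b) \<noteq> (1, 2)"
  shows "\<not> (\<exists>tau'::real. tau' > 0 \<and>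
           (\<forall>s::complex. Re s > 0 \<longrightarrow>
              Z_U a b R0 Rinf tau s =
                complex_of_real Rinf + complex_of_real (R0 - Rinf) / (1 + s * complex_of_real tau')))"
proof
  assume "\<exists>tau'::real. tau' > 0 \<and>
           (\<forall>s::complex. Re s > 0 \<longrightarrow>
              Z_U a b R0 Rinf tau s =
                complex_of_real Rinf + complex_of_real (R0 - Rinf) / (1 + s * complex_of_real tau'))"
  then obtain tau' where tp: "tau' > 0" and H: "\<And>s::complex. Re s > 0 \<Longrightarrow>
              Z_U a b R0 Rinf tau s =
                complex_of_real Rinf + complex_of_real (R0 - Rinf) / (1 + s * complex_of_real tau')"
    by blast
  define F where "F = (\<lambda>t::real. t powr (a - 1) * (1 + t) powr (b - a - 1))"
  define I where "I = (\<lambda>y::real. integral {0<..} (\<lambda>t. exp (- (y * t)) * F t))"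
  have Ga: "Gamma a > 0" using assms(1) by (rule Gamma_real_pos)
  define K where "K = Gamma a * tau / tau'"
  have Kpos: "K > 0" using Ga assms(6) tp by (simp add: K_def)
  have U: "tricomiU a b (complex_of_real y) = complex_of_real (I y / Gamma a)" for y
  proof -
    have eq: "(\<lambda>t::real. exp (- complex_of_real y * complex_of_real t) *
                                 complex_of_real (t powr (a - 1) * (1 + t) powr (b - a - 1)))
          = (\<lambda>t. complex_of_real (exp (- (y * t)) * F t))"
      by (simp only: F_def exp_of_real[symmetric] of_real_mult of_real_minus mult_minus_left)
    have "tricomiU a b (complex_of_real y) = complex_of_real (1 / Gamma a) *
        integral {0<..} (\<lambda>t. complex_of_real (exp (- (y * t)) * F t))"
      unfolding tricomiU_def eq ..
    also have "\<dots> = complex_of_real (1 / Gamma a) * complex_of_real (I y)"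
      by (simp only: integral_cor I_def)
    finally show ?thesis unfolding of_real_mult[symmetric] by simp
  qed
  have IK: "I y = K / y" if y: "y > 0" for y
  proof -
    define x where "x = y / tau"
    have x: "x > 0" using y assms(6) by (simp add: x_def)
    define r where "r = I y / Gamma a"
    have xy: "complex_of_real x * complex_of_real tau = complex_of_real y"
    proof -
      have "x * tau = y" using assms(6) by (simp add: x_def)
      then show ?thesis by (metis of_real_mult)
    qed
    have "Z_U a b R0 Rinf tau (complex_of_real x) = complex_of_real Rinf + complex_of_real (R0 - Rinf) *
       (tricomiU a b (complex_of_real y) / (1 + tricomiU a b (complex_of_real y)))"
      unfolding Z_U_def xy ..
    also have "\<dots> = complex_of_real (Rinf + (R0 - Rinf) * (r / (1 + r)))"
      unfolding U r_def[symmetric] by simp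
    finally have zu: "Z_U a b R0 Rinf tau (complex_of_real x) = complex_of_real (Rinf + (R0 - Rinf) * (r / (1 + r)))" .
    have rhs: "complex_of_real Rinf + complex_of_real (R0 - Rinf) / (1 + complex_of_real x * complex_of_real tau')
        = complex_of_real (Rinf + (R0 - Rinf) / (1 + x * tau'))"
      by simp
    have rx: "Re (complex_of_real x) > 0" using x by simp
    have "Rinf + (R0 - Rinf) * (r / (1 + r)) = Rinf + (R0 - Rinf) / (1 + x * tau')"
      using H[OF rx] unfolding zu rhs of_real_eq_iff .
    then have eq': "(R0 - Rinf) * (r / (1 + r)) = (R0 - Rinf) * (1 / (1 + x * tau'))"
      by (simp only: add_left_cancel times_divide_eq_right mult_1_right)
    have c0: "R0 - Rinf \<noteq> 0" using assms(4) by simp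
    have e: "r / (1 + r) = 1 / (1 + x * tau')"
      using mult_left_cancel[THEN iffD1, OF c0 eq'] .
    have xt: "1 + x * tau' > 0" using x tp by (simp add: add_pos_pos)
    have "1 + r \<noteq> 0"
    proof
      assume "1 + r = 0" then show False using e xt by simp
    qed
    then have "r * (1 + x * tau') = 1 * (1 + r)" using e xt by (simp add: frac_eq_eq)
    then have "r * (x * tau') = 1" by (simp add: algebra_simps)
    then have "I y * (y * tau') = Gamma a * tau" using Ga assms(6)
      by (simp add: r_def x_def field_simps)
    then show ?thesis using y tp by (simp add: K_def field_simps)
  qed
  have HI: "((\<lambda>t. exp (- (y * t)) * F t) has_integral K / y) {0<..}" if y: "y > 0" for y
  proof -
    have "I y \<noteq> 0" using IK[OF y] Kpos y by simp
    then have "(\<lambda>t. exp (- (y * t)) * F t) integrable_on {0<..}"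
      unfolding I_def using not_integrable_integral by blast
    then show ?thesis using IK[OF y] unfolding I_def by (simp add: has_integral_iff)
  qed
  consider "a > 1" | "a < 1" | "a = 1" by linarith
  then show False
  proof cases
    case 1
    have le: "K \<le> Gamma a * y powr (1 - a)" if y: "y > 0" for y
    proof -
      have "K / y \<le> Gamma a / y powr a"
      proof (rule has_integral_le[OF HI[OF y] gamma_scaled[OF assms(1) y]])
        fix t :: real assume t: "t \<in> {0<..}"
        have "(1 + t) powr (b - a - 1) \<le> (1 + t) powr 0"
          using t 1 assms(3) by (intro powr_mono) auto
        then have "F t \<le> t powr (a - 1)" using t
          by (simp add: F_def mult_left_le)
        then show "exp (- (y * t)) * F t \<le> t powr (a - 1) * exp (- (y * t))"
          by (simp add: mult.commute)
      qed
      then have "K \<le> Gamma a * (y / y powr a)" using y by (simp add: field_simps)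
      also have "y / y powr a = y powr (1 - a)" using y by (simp add: powr_diff)
      finally show ?thesis by simp
    qed
    define c where "c = K / (2 * Gamma a)"
    have c: "c > 0" using Ga Kpos by (simp add: c_def)
    define y where "y = c powr (1 / (1 - a))"
    have y: "y > 0" "y powr (1 - a) = c" using powr_inv_exp[OF c, of "1 - a"] 1 by (auto simp: y_def)
    have "K \<le> Gamma a * c" using le[OF y(1)] y(2) by simp
    also have "Gamma a * c = K / 2" using Ga by (simp add: c_def)
    finally show False using Kpos by simp
  next
    case 2
    have ge: "Gamma a * y powr (1 - a) \<le> 2 * K + 1" if y: "y > 0" for y
    proof -
      have G: "((\<lambda>t. (t powr (a - 1) * exp (- (y * t)) - exp (- (y * t))) * (1 / 2)) has_integral
               (Gamma a / y powr a - 1 / y) * (1 / 2)) {0<..}"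
        by (intro has_integral_mult_left has_integral_diff gamma_scaled exp_scaled assms(1) y)
      have "(Gamma a / y powr a - 1 / y) * (1 / 2) \<le> K / y"
      proof (rule has_integral_le[OF G HI[OF y]])
        fix t :: real assume t: "t \<in> {0<..}"
        have Fn: "F t \<ge> 0" by (simp add: F_def)
        have "(t powr (a - 1) - 1) / 2 \<le> F t"
        proof (cases "t \<ge> 1")
          case True
          have "t powr (a - 1) \<le> t powr 0" using True 2 by (intro powr_mono) auto
          then show ?thesis using True Fn by simp
        next
          case False
          have "(1 + t) powr (- 1) \<le> (1 + t) powr (b - a - 1)"
            using t assms(2) 2 by (intro powr_mono) auto
          moreover have "(1 + t) powr (- 1) = 1 / (1 + t)" using t
            by (simp add: powr_minus divide_inverse)
          moreover have "1 / (1 + t) \<ge> 1 / 2" using False t by (simp add: field_simps)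
          ultimately have h: "(1 + t) powr (b - a - 1) \<ge> 1 / 2" by linarith
          have "t powr (a - 1) * (1 / 2) \<le> t powr (a - 1) * (1 + t) powr (b - a - 1)"
            using h by (intro mult_left_mono) auto
          then show ?thesis by (simp add: F_def)
        qed
        moreover have "exp (- (y * t)) > 0" by simp
        ultimately have "exp (- (y * t)) * ((t powr (a - 1) - 1) / 2) \<le> exp (- (y * t)) * F t"
          by (intro mult_left_mono) auto
        then show "(t powr (a - 1) * exp (- (y * t)) - exp (- (y * t))) * (1 / 2) \<le> exp (- (y * t)) * F t"
          by (simp add: algebra_simps)
      qed
      then have m: "(Gamma a / y powr a - 1 / y) * (1 / 2) * (2 * y) \<le> K / y * (2 * y)"
        using y by (intro mult_right_mono) auto
      have l: "(Gamma a / y powr a - 1 / y) * (1 / 2) * (2 * y) = Gamma a * (y / y powr a) - 1"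
        using y by (simp add: field_simps)
      have r: "K / y * (2 * y) = 2 * K" using y by simp
      have "Gamma a * (y / y powr a) - 1 \<le> 2 * K" using m unfolding l r .
      also have "y / y powr a = y powr (1 - a)" using y by (simp add: powr_diff)
      finally show ?thesis by simp
    qed
    define c where "c = (2 * K + 2) / Gamma a"
    have c: "c > 0" using Ga Kpos by (simp add: c_def)
    define y where "y = c powr (1 / (1 - a))"
    have y: "y > 0" "y powr (1 - a) = c" using powr_inv_exp[OF c, of "1 - a"] 2 by (auto simp: y_def)
    have "Gamma a * c \<le> 2 * K + 1" using ge[OF y(1)] y(2) by simp
    moreover have "Gamma a * c = 2 * K + 2" using Ga by (simp add: c_def)
    ultimately show False by simp
  next
    case 3
    then have b2: "b < 2" using assms(3,7) by auto
    have bp: "b - 1 > 0" using assms(2) by simp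
    have Gb: "Gamma (b - 1) > 0" using bp by (rule Gamma_real_pos)
    have le: "K \<le> Gamma (b - 1) * y powr (2 - b)" if y: "y > 0" for y
    proof -
      have "K / y \<le> Gamma (b - 1) / y powr (b - 1)"
      proof (rule has_integral_le[OF HI[OF y] gamma_scaled[OF bp y]])
        fix t :: real assume t: "t \<in> {0<..}"
        have "(1 + t) powr (b - 2) \<le> t powr (b - 2)"
          using t b2 by (intro powr_mono2') auto
        then have "F t \<le> t powr (b - 1 - 1)" using t 3
          by (simp add: F_def)
        then show "exp (- (y * t)) * F t \<le> t powr (b - 1 - 1) * exp (- (y * t))"
          by (simp add: mult.commute)
      qed
      then have "K \<le> Gamma (b - 1) * (y / y powr (b - 1))" using y by (simp add: field_simps)
      also have "y / y powr (b - 1) = y powr (2 - b)"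
      proof -
        have "y powr (1 - (b - 1)) = y powr 1 / y powr (b - 1)" by (rule powr_diff)
        moreover have "1 - (b - 1) = 2 - b" by simp
        ultimately show ?thesis using y by simp
      qed
      finally show ?thesis by simp
    qed
    define c where "c = K / (2 * Gamma (b - 1))"
    have c: "c > 0" using Gb Kpos by (simp add: c_def)
    define y where "y = c powr (1 / (2 - b))"
    have y: "y > 0" "y powr (2 - b) = c" using powr_inv_exp[OF c, of "2 - b"] b2 by (auto simp: y_def)
    have "K \<le> Gamma (b - 1) * c" using le[OF y(1)] y(2) by simp
    also have "Gamma (b - 1) * c = K / 2" using Gb by (simp add: c_def)
    finally show False using Kpos by simp
  qed
qed

end
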